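(* Let $(s,\vec r)$ be a molecule with $N$ atoms and pairwise distinct positions, and let $r_c>\max_{i,j}\|\vec r_i-\vec r_j\|$, so that every local environment contains all atoms. Let $g$ be a function from local environments to $\mathbb{R}^{3\times 3}$ which is $\mathrm{O}(3)$-equivariant and such that $g(A)$ has rank $3$ for every local environment $A$ for which no $o\in\mathrm{O}(3)$, $o\neq I$, satisfies $\{(s',xo^T):(s',x)\in A\}=A$. Define $\vec E_i=g(\{(s_j,\vec r_i-\vec r_j): j=1,\dots,N\})$ and $\vec E=\sum_{i=1}^N\vec E_i$. If $\mathrm{rank}(\vec E_i)<3$ for some $i$, then $\mathrm{rank}(\vec E)<3$.
   Context: $s\in\mathbb{R}^{N\times d}$ and $\vec r\in\mathbb{R}^{N\times3}$ have rows $s_i$ and $\vec r_i\in\mathbb{R}^{1\times 3}$. $\mathrm{O}(3)=\{Q\in\mathbb{R}^{3\times3}:QQ^T=I\}$ and $I$ is the identity. A local environment is a finite set of pairs $(s',x)$ with $s'\in\mathbb{R}^d$, $x\in\mathbb{R}^{1\times 3}$. $g$ being $\mathrm{O}(3)$-equivariant means $g(\{(s',xo^T):(s',x)\in A\})=g(A)o^T$ for all $o\in\mathrm{O}(3)$ and all local environments $A$. *)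

theory Defs
  imports "HOL-Analysis.Analysis"
begin

text \<open>A local environment is a finite set of pairs (s', x) with s' in R^d and x a row
  vector in R^{1x3} (represented as real^3). The orthogonal group acts by x \<mapsto> x Q^T.\<close>

type_synonym 'd local_env = "((real^'d) \<times> (real^3)) set"

definition act_env :: "real^3^3 \<Rightarrow> 'd local_env \<Rightarrow> 'd local_env" where
  "act_env Q A = (\<lambda>(s', x). (s', x v* transpose Q)) ` A"

definition O3_equivariant :: "('d local_env \<Rightarrow> real^3^3) \<Rightarrow> bool" where
  "O3_equivariant g \<longleftrightarrow>
     (\<forall>Q A. orthogonal_matrix Q \<longrightarrow> finite A \<longrightarrow> g (act_env Q A) = g A ** transpose Q)"

text \<open>A has trivial symmetry group: no orthogonal Q other than the identity fixes A.\<close>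
definition trivial_stabilizer :: "'d local_env \<Rightarrow> bool" where
  "trivial_stabilizer A \<longleftrightarrow>
     \<not> (\<exists>Q. orthogonal_matrix Q \<and> Q \<noteq> mat 1 \<and> act_env Q A = A)"

definition environment :: "('n \<Rightarrow> real^'d) \<Rightarrow> ('n \<Rightarrow> real^3) \<Rightarrow> 'n \<Rightarrow> 'd local_env" where
  "environment s r i = (\<lambda>j. (s j, r i - r j)) ` UNIV"

end

theory Submission
  imports Defs
begin

lemma matrix_add_rdistrib': "((B + C) ** A) = (B ** A) + (C ** A)"
  by (vector matrix_matrix_mult_def sum.distrib[symmetric] field_simps)

lemma sum_matrix_mul_right:
  fixes A :: "'i \<Rightarrow> real^'n^'m" and B :: "real^'p^'n"
  shows "finite S \<Longrightarrow> (\<Sum>k\<in>S. A k ** B) = (\<Sum>k\<in>S. A k) ** B"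
  by (induction S rule: finite_induct) (auto simp: matrix_add_rdistrib')

theorem corollary1:
  fixes s :: "'n::finite \<Rightarrow> real^'d"
    and r :: "'n \<Rightarrow> real^3"
    and rc :: real
    and g :: "'d local_env \<Rightarrow> real^3^3"
  assumes distinct_pos: "inj r"
    and cutoff: "\<forall>i j. norm (r i - r j) < rc"
    and equiv: "O3_equivariant g"
    and full_rank: "\<forall>A. finite A \<longrightarrow> trivial_stabilizer A \<longrightarrow> rank (g A) = 3"
    and some_deficient: "\<exists>i. rank (g (environment s r i)) < 3"
  shows "rank (\<Sum>i\<in>UNIV. g (environment s r i)) < 3"
proof -
  obtain i where hi: "rank (g (environment s r i)) < 3" using some_deficient by blast
  have fin: "finite (environment s r i)" by (simp add: environment_def)
  have "\<not> trivial_stabilizer (environment s r i)" using full_rank fin hi by auto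
  then obtain Q where Qo: "orthogonal_matrix Q" and Q1: "Q \<noteq> mat 1"
    and Qfix: "act_env Q (environment s r i) = environment s r i"
    unfolding trivial_stabilizer_def by blast
  have vQ: "\<And>x. x v* transpose Q = Q *v x"
    by (metis transpose_matrix_vector transpose_transpose)
  have Qinj: "inj (\<lambda>x. x v* transpose Q)"
  proof (rule injI)
    fix x y assume "x v* transpose Q = y v* transpose Q"
    then have "transpose Q *v (Q *v x) = transpose Q *v (Q *v y)" by (simp add: vQ)
    then show "x = y" using Qo
      by (simp add: matrix_vector_mul_assoc orthogonal_matrix)
  qed
  have ex: "\<exists>j'. s j' = s j \<and> r i - r j' = (r i - r j) v* transpose Q" for j
  proof -
    have "(s j, (r i - r j) v* transpose Q) \<in> act_env Q (environment s r i)"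
      unfolding act_env_def environment_def by force
    then show ?thesis using Qfix unfolding environment_def by auto
  qed
  define p where "p j = (SOME j'. s j' = s j \<and> r i - r j' = (r i - r j) v* transpose Q)" for j
  have p: "s (p j) = s j" "r i - r (p j) = (r i - r j) v* transpose Q" for j
    using someI_ex[OF ex[of j]] unfolding p_def by auto
  have pinj: "inj p"
  proof (rule injI)
    fix a b assume "p a = p b"
    then have "(r i - r a) v* transpose Q = (r i - r b) v* transpose Q" using p(2) by metis
    then have "r i - r a = r i - r b" using Qinj by (simp add: inj_eq)
    then show "a = b" using distinct_pos by (simp add: inj_eq)
  qed
  have psurj: "surj p" using pinj finite_UNIV_inj_surj[of p] by simp
  have diff: "r (p k) - r (p j) = (r k - r j) v* transpose Q" for k j
  proof -
    have "r (p k) - r (p j) = (r i - r (p j)) - (r i - r (p k))" by simp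
    also have "\<dots> = (r i - r j) v* transpose Q - (r i - r k) v* transpose Q" by (simp add: p(2))
    also have "\<dots> = ((r i - r j) - (r i - r k)) v* transpose Q" by (rule vector_matrix_mult_diff_distrib[symmetric])
    also have "(r i - r j) - (r i - r k) = r k - r j" by simp
    finally show ?thesis .
  qed
  have envp: "environment s r (p k) = act_env Q (environment s r k)" for k
  proof -
    have "environment s r (p k) = (\<lambda>j. (s j, r (p k) - r j)) ` (p ` UNIV)"
      using psurj unfolding environment_def by simp
    also have "\<dots> = (\<lambda>j. (s j, (r k - r j) v* transpose Q)) ` UNIV"
      by (simp add: image_image p(1) diff)
    also have "\<dots> = act_env Q (environment s r k)"
      unfolding act_env_def environment_def by (simp add: image_image)
    finally show ?thesis .
  qed
  define E where "E = (\<Sum>i\<in>UNIV. g (environment s r i))"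
  have "E = (\<Sum>k\<in>UNIV. g (environment s r (p k)))"
    unfolding E_def using sum.reindex[OF pinj, of "\<lambda>k. g (environment s r k)"] psurj by simp
  also have "\<dots> = (\<Sum>k\<in>UNIV. g (environment s r k) ** transpose Q)"
    using equiv Qo unfolding O3_equivariant_def envp by (simp add: environment_def)
  also have "\<dots> = E ** transpose Q" unfolding E_def by (simp add: sum_matrix_mul_right)
  finally have EQ: "E = E ** transpose Q" .
  show ?thesis unfolding E_def[symmetric]
  proof (rule ccontr)
    assume "\<not> rank E < 3"
    with rank_bound[of E] have "rank E = CARD(3)" by simp
    then have "inj ((*v) E)" using full_rank_injective[of E] by simp
    then obtain B where B: "B ** E = mat 1" using matrix_left_invertible_injective by blast
    have "B ** E = B ** (E ** transpose Q)" using EQ by simp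
    then have "mat 1 = transpose Q" using B by (simp add: matrix_mul_assoc)
    then have "Q = mat 1" by (metis transpose_mat transpose_transpose)
    with Q1 show False by simp
  qed
qed

end
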